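(* Let $G$ be a simple stochastic game, let $A$ be a subset of the arcs of $G$, and let $\sigma$ be a positional $\text{MAX}$ strategy. Then $K^{G}_{\sigma} = K^{G[A,\sigma]}_{\sigma}$, i.e. a vertex $x$ of $G$ satisfies $v^G_\sigma(x)=0$ if and only if $v^{G[A,\sigma]}_\sigma(x)=0$.
   Context: A simple stochastic game (SSG) $G$ is a finite directed graph whose vertex set $V$ is partitioned into $V_{\max}$ (MAX vertices), $V_{\min}$ (MIN vertices), $V_R$ (random vertices) and a nonempty set $V_S$ (sinks); every vertex of $V_{\max}\cup V_{\min}\cup V_R$ has at least one outgoing arc, every sink has exactly one outgoing arc, which is a self-loop; each random vertex $x$ carries a probability distribution $p_x$ with rational values on its out-neighbourhood $N^+(x)$, with $p_x(y)>0$ for all $y\in N^+(x)$; each sink $s$ has a rational value $\mathrm{Val}(s)\in[0,1]$. A positional MAX (resp. MIN) strategy is a map $\sigma$ (resp. $\tau$) assigning to each MAX (resp. MIN) vertex one of its out-neighbours. Given $\sigma,\tau$ and a start vertex $x_0$, the random play $X_0=x_0,X_1,\dots$ is defined by $X_{t+1}=\sigma(X_t)$ if $X_t\in V_{\max}$, $X_{t+1}=\tau(X_t)$ if $X_t\in V_{\min}$, $X_{t+1}$ drawn according to $p_{X_t}$ independently of everything else if $X_t\in V_R$, and $X_{t+1}=X_t$ if $X_t\in V_S$. The value of the play is $\mathrm{Val}(s)$ if the play reaches a sink $s$ and $0$ if it never reaches a sink; $v^G_{\sigma,\tau}(x_0)$ is its expectation. A best response to $\sigma$ is a positional MIN strategy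 $\tau$ with $v_{\sigma,\tau}\le v_{\sigma,\tau'}$ pointwise for all MIN strategies $\tau'$; positional best responses exist, and $v^G_\sigma:=v^G_{\sigma,\tau}$ for any best response $\tau$. $K^G_\sigma$ denotes the set of vertices $x$ with $v^G_\sigma(x)=0$. Transformed game: for a set $A$ of arcs of $G$ and $f:A\to\mathbb{Q}$, $G[A,f]$ is the SSG obtained from a copy of $G$ by replacing each arc $e=(x,y)\in A$ by an arc $(x,s_e)$, where $s_e$ is a new sink with value $f(e)$ (if $x$ is random, $p_x(s_e)=p_x(y)$); the vertex $y$ is kept. $G[A,\sigma]$ denotes $G[A,f]$ with $f((x,y))=v^G_\sigma(y)$. Strategies of $G$ and $G[A,\sigma]$ are identified (a MAX vertex $x$ with $\sigma(x)=y$, $(x,y)\in A$, moves to $s_{(x,y)}$ in $G[A,\sigma]$), and value vectors are compared only on the vertices of $G$. *)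

theory Defs
  imports "HOL-Probability.Probability"
begin

text \<open>The distribution of a random vertex x is given
  as a probability mass function rdist x whose support is the out-neighbourhood of x
  (so p_x(y) = pmf (rdist x) y > 0 exactly for y in N+(x)).\<close>

record 'v ssg =
  Vmax :: "'v set"
  Vmin :: "'v set"
  VR   :: "'v set"
  VS   :: "'v set"
  arcs :: "('v \<times> 'v) set"
  rdist :: "'v \<Rightarrow> 'v pmf"
  sval :: "'v \<Rightarrow> real"

definition verts :: "('v, 'b) ssg_scheme \<Rightarrow> 'v set" where
  "verts G = Vmax G \<union> Vmin G \<union> VR G \<union> VS G"

definition outn :: "('v, 'b) ssg_scheme \<Rightarrow> 'v \<Rightarrow> 'v set" where
  "outn G x = {y. (x, y) \<in> arcs G}"

definition is_ssg :: "('v, 'b) ssg_scheme \<Rightarrow> bool" where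
  "is_ssg G \<longleftrightarrow>
     finite (verts G) \<and>
     Vmax G \<inter> Vmin G = {} \<and> Vmax G \<inter> VR G = {} \<and> Vmax G \<inter> VS G = {} \<and>
     Vmin G \<inter> VR G = {} \<and> Vmin G \<inter> VS G = {} \<and> VR G \<inter> VS G = {} \<and>
     VS G \<noteq> {} \<and>
     arcs G \<subseteq> verts G \<times> verts G \<and>
     (\<forall>x \<in> Vmax G \<union> Vmin G \<union> VR G. outn G x \<noteq> {}) \<and>
     (\<forall>s \<in> VS G. outn G s = {s}) \<and>
     (\<forall>x \<in> VR G. set_pmf (rdist G x) = outn G x \<and> (\<forall>y. pmf (rdist G x) y \<in> \<rat>)) \<and>
     (\<forall>s \<in> VS G. sval G s \<in> \<rat> \<and> 0 \<le> sval G s \<and> sval G s \<le> 1)"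

definition max_strategy :: "('v, 'b) ssg_scheme \<Rightarrow> ('v \<Rightarrow> 'v) \<Rightarrow> bool" where
  "max_strategy G \<sigma> \<longleftrightarrow> (\<forall>x \<in> Vmax G. (x, \<sigma> x) \<in> arcs G)"

definition min_strategy :: "('v, 'b) ssg_scheme \<Rightarrow> ('v \<Rightarrow> 'v) \<Rightarrow> bool" where
  "min_strategy G \<tau> \<longleftrightarrow> (\<forall>x \<in> Vmin G. (x, \<tau> x) \<in> arcs G)"

definition step :: "('v, 'b) ssg_scheme \<Rightarrow> ('v \<Rightarrow> 'v) \<Rightarrow> ('v \<Rightarrow> 'v) \<Rightarrow> 'v \<Rightarrow> 'v pmf" where
  "step G \<sigma> \<tau> x =
     (if x \<in> Vmax G then return_pmf (\<sigma> x)
      else if x \<in> Vmin G then return_pmf (\<tau> x)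
      else if x \<in> VR G then rdist G x
      else return_pmf x)"

fun play_dist :: "('v, 'b) ssg_scheme \<Rightarrow> ('v \<Rightarrow> 'v) \<Rightarrow> ('v \<Rightarrow> 'v) \<Rightarrow> 'v \<Rightarrow> nat \<Rightarrow> 'v pmf" where
  "play_dist G \<sigma> \<tau> x0 0 = return_pmf x0"
| "play_dist G \<sigma> \<tau> x0 (Suc t) = bind_pmf (play_dist G \<sigma> \<tau> x0 t) (step G \<sigma> \<tau>)"

definition sink_payoff :: "('v, 'b) ssg_scheme \<Rightarrow> 'v \<Rightarrow> real" where
  "sink_payoff G y = (if y \<in> VS G then sval G y else 0)"

text \<open>Since sinks are absorbing, the value of the play (Val(s) if sink s is reached,
  0 otherwise) is the limit of sink_payoff(X_t); its expectation is the limit of the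
  expectations E[sink_payoff(X_t)] (monotone/dominated convergence).\<close>

definition play_value :: "('v, 'b) ssg_scheme \<Rightarrow> ('v \<Rightarrow> 'v) \<Rightarrow> ('v \<Rightarrow> 'v) \<Rightarrow> 'v \<Rightarrow> real" where
  "play_value G \<sigma> \<tau> x0 =
     lim (\<lambda>t. measure_pmf.expectation (play_dist G \<sigma> \<tau> x0 t) (sink_payoff G))"

definition best_response :: "('v, 'b) ssg_scheme \<Rightarrow> ('v \<Rightarrow> 'v) \<Rightarrow> ('v \<Rightarrow> 'v) \<Rightarrow> bool" where
  "best_response G \<sigma> \<tau> \<longleftrightarrow> min_strategy G \<tau> \<and>
     (\<forall>\<tau>'. min_strategy G \<tau>' \<longrightarrow> (\<forall>x \<in> verts G. play_value G \<sigma> \<tau> x \<le> play_value G \<sigma> \<tau>' x))"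

definition value_sigma :: "('v, 'b) ssg_scheme \<Rightarrow> ('v \<Rightarrow> 'v) \<Rightarrow> 'v \<Rightarrow> real" where
  "value_sigma G \<sigma> = play_value G \<sigma> (SOME \<tau>. best_response G \<sigma> \<tau>)"

definition Kset :: "('v, 'b) ssg_scheme \<Rightarrow> ('v \<Rightarrow> 'v) \<Rightarrow> 'v set" where
  "Kset G \<sigma> = {x \<in> verts G. value_sigma G \<sigma> x = 0}"

text \<open>Vertices of G[A,f]: Inl x for the copy of vertex x of G, Inr e for the new sink s_e.\<close>

definition redirect :: "('v \<times> 'v) set \<Rightarrow> 'v \<Rightarrow> 'v \<Rightarrow> 'v + ('v \<times> 'v)" where
  "redirect A x y = (if (x, y) \<in> A then Inr (x, y) else Inl y)"

definition transform :: "('v, 'b) ssg_scheme \<Rightarrow> ('v \<times> 'v) set \<Rightarrow> ('v \<times> 'v \<Rightarrow> real)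
                          \<Rightarrow> ('v + ('v \<times> 'v)) ssg" where
  "transform G A f =
     \<lparr> Vmax = Inl ` Vmax G, Vmin = Inl ` Vmin G, VR = Inl ` VR G,
       VS = Inl ` VS G \<union> Inr ` A,
       arcs = {(Inl x, redirect A x y) | x y. (x, y) \<in> arcs G} \<union> {(Inr e, Inr e) | e. e \<in> A},
       rdist = (\<lambda>u. case u of Inl x \<Rightarrow> map_pmf (redirect A x) (rdist G x)
                             | Inr e \<Rightarrow> return_pmf (Inr e)),
       sval = (\<lambda>u. case u of Inl x \<Rightarrow> sval G x | Inr e \<Rightarrow> f e) \<rparr>"

definition transform_sigma :: "('v, 'b) ssg_scheme \<Rightarrow> ('v \<times> 'v) set \<Rightarrow> ('v \<Rightarrow> 'v)
                                \<Rightarrow> ('v + ('v \<times> 'v)) ssg" where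
  "transform_sigma G A \<sigma> = transform G A (\<lambda>(x, y). value_sigma G \<sigma> y)"

definition lift_strategy :: "('v \<times> 'v) set \<Rightarrow> ('v \<Rightarrow> 'v) \<Rightarrow> 'v + ('v \<times> 'v) \<Rightarrow> 'v + ('v \<times> 'v)" where
  "lift_strategy A \<sigma> u = (case u of Inl x \<Rightarrow> redirect A x (\<sigma> x) | Inr e \<Rightarrow> Inr e)"

end

theory Submission
  imports Defs
begin


lemma integral_bind_pmf_bnd:
  fixes f :: "'b \<Rightarrow> real"
  assumes "\<And>x. \<bar>f x\<bar> \<le> B"
  shows "measure_pmf.expectation (bind_pmf M N) f =
         measure_pmf.expectation M (\<lambda>x. measure_pmf.expectation (N x) f)"
  unfolding measure_pmf_bind
  by (rule integral_bind[where K="count_space UNIV" and B=B and B'=1])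
     (auto simp: assms measure_pmf.emeasure_space_1 measure_pmf_in_subprob_space intro: measure_pmf.finite_measure)

lemma play_dist_Suc':
  "play_dist H \<sigma> \<tau> x (Suc t) = bind_pmf (step H \<sigma> \<tau> x) (\<lambda>y. play_dist H \<sigma> \<tau> y t)"
proof (induction t arbitrary: x)
  case 0
  then show ?case by (simp add: bind_return_pmf bind_return_pmf')
next
  case (Suc t)
  have "play_dist H \<sigma> \<tau> x (Suc (Suc t)) = bind_pmf (play_dist H \<sigma> \<tau> x (Suc t)) (step H \<sigma> \<tau>)"
    by simp
  also have "\<dots> = bind_pmf (step H \<sigma> \<tau> x) (\<lambda>y. play_dist H \<sigma> \<tau> y (Suc t))"
    by (subst Suc.IH) (simp add: bind_assoc_pmf)
  finally show ?case .
qed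



definition wfg :: "'v ssg \<Rightarrow> bool" where
 "wfg H \<longleftrightarrow> finite (VS H) \<and> (\<forall>s\<in>VS H. 0 \<le> sval H s) \<and> Vmax H \<inter> Vmin H = {} \<and>
    Vmax H \<inter> VR H = {} \<and> Vmin H \<inter> VR H = {} \<and> VS H \<inter> (Vmax H \<union> Vmin H \<union> VR H) = {} \<and>
    (\<forall>x\<in>VR H. finite (set_pmf (rdist H x)))"

abbreviation EE where
  "EE H \<sigma> \<tau> x t \<equiv> measure_pmf.expectation (play_dist H \<sigma> \<tau> x t) (sink_payoff H)"

definition bnd :: "'v ssg \<Rightarrow> real" where
  "bnd H = (\<Sum>s\<in>VS H. sval H s)"

abbreviation IS where
  "IS M f \<equiv> measure_pmf.expectation M f"

lemma fin_step: "wfg H \<Longrightarrow> finite (set_pmf (step H \<sigma> \<tau> x))"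
  unfolding step_def wfg_def by auto

lemma r_bnd:
  assumes "wfg H" shows "0 \<le> sink_payoff H y" "sink_payoff H y \<le> bnd H"
proof -
  show "0 \<le> sink_payoff H y" using assms unfolding wfg_def sink_payoff_def by auto
  show "sink_payoff H y \<le> bnd H"
  proof (cases "y \<in> VS H")
    case True
    then show ?thesis using assms unfolding wfg_def sink_payoff_def bnd_def
      by (auto intro!: member_le_sum)
  next
    case False
    then show ?thesis using assms unfolding wfg_def sink_payoff_def bnd_def
      by (auto intro!: sum_nonneg)
  qed
qed

lemma int_mono_fin:
  fixes f g :: "'a \<Rightarrow> real"
  assumes "finite (set_pmf M)" "\<And>y. y \<in> set_pmf M \<Longrightarrow> f y \<le> g y"
  shows "IS M f \<le> IS M g"
  using assms by (intro integral_mono_AE integrable_measure_pmf_finite) (auto simp: AE_measure_pmf_iff)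

lemma int_step_mono:
  fixes f g :: "'a \<Rightarrow> real"
  assumes "wfg H" "\<And>y. f y \<le> g y"
  shows "IS (step H \<sigma> \<tau> x) f \<le> IS (step H \<sigma> \<tau> x) g"
  using assms fin_step int_mono_fin by metis

lemma EE_0: "EE H \<sigma> \<tau> x 0 = sink_payoff H x" by simp

lemma EE_Suc:
  assumes "wfg H"
  shows "EE H \<sigma> \<tau> x (Suc t) = IS (step H \<sigma> \<tau> x) (\<lambda>y. EE H \<sigma> \<tau> y t)"
  unfolding play_dist_Suc'
  by (rule integral_bind_pmf_bnd[where B="bnd H"])
     (use r_bnd[OF assms] in \<open>auto simp: abs_le_iff intro: order_trans[rotated]\<close>)

lemma EE_bnd:
  assumes "wfg H" shows "0 \<le> EE H \<sigma> \<tau> x t \<and> EE H \<sigma> \<tau> x t \<le> bnd H"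
proof (induction t arbitrary: x)
  case 0
  then show ?case using r_bnd[OF assms] by simp
next
  case (Suc t)
  have "IS (step H \<sigma> \<tau> x) (\<lambda>_. 0) \<le> IS (step H \<sigma> \<tau> x) (\<lambda>y. EE H \<sigma> \<tau> y t)"
    by (rule int_step_mono[OF assms]) (use Suc in auto)
  moreover have "IS (step H \<sigma> \<tau> x) (\<lambda>y. EE H \<sigma> \<tau> y t) \<le> IS (step H \<sigma> \<tau> x) (\<lambda>_. bnd H)"
    by (rule int_step_mono[OF assms]) (use Suc in auto)
  ultimately show ?case unfolding EE_Suc[OF assms] by simp
qed

lemma EE_mono:
  assumes "wfg H" shows "EE H \<sigma> \<tau> x t \<le> EE H \<sigma> \<tau> x (Suc t)"
proof (induction t arbitrary: x)
  case 0
  show ?case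
  proof (cases "x \<in> VS H")
    case True
    then have "step H \<sigma> \<tau> x = return_pmf x" using assms unfolding wfg_def step_def by auto
    then show ?thesis unfolding EE_Suc[OF assms] by simp
  next
    case False
    then have "EE H \<sigma> \<tau> x 0 = 0" by (simp add: sink_payoff_def)
    also have "0 \<le> EE H \<sigma> \<tau> x 1" using EE_bnd[OF assms] by blast
    finally show ?thesis by simp
  qed
next
  case (Suc t)
  show ?case unfolding EE_Suc[OF assms, of _ _ x]
    by (rule int_step_mono[OF assms]) (use Suc in auto)
qed

lemma EE_lim:
  assumes "wfg H" shows "(\<lambda>t. EE H \<sigma> \<tau> x t) \<longlonglongrightarrow> play_value H \<sigma> \<tau> x"
proof -
  have inc: "incseq (\<lambda>t. EE H \<sigma> \<tau> x t)" using EE_mono[OF assms] by (simp add: incseq_SucI)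
  have "bdd_above (range (\<lambda>t. EE H \<sigma> \<tau> x t))" using EE_bnd[OF assms]
    by (auto intro!: bdd_aboveI[where M="bnd H"])
  then have "(\<lambda>t. EE H \<sigma> \<tau> x t) \<longlonglongrightarrow> (SUP t. EE H \<sigma> \<tau> x t)"
    using inc by (rule LIMSEQ_incseq_SUP)
  then show ?thesis unfolding play_value_def using limI by (metis convergentI convergent_LIMSEQ_iff)
qed

lemma pv_bnd:
  assumes "wfg H"
  shows "0 \<le> play_value H \<sigma> \<tau> x" "play_value H \<sigma> \<tau> x \<le> bnd H"
    "sink_payoff H x \<le> play_value H \<sigma> \<tau> x"
proof -
  note L = EE_lim[OF assms, of \<sigma> \<tau> x]
  show "0 \<le> play_value H \<sigma> \<tau> x"
    by (rule LIMSEQ_le_const[OF L]) (use EE_bnd[OF assms] in auto)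
  show "play_value H \<sigma> \<tau> x \<le> bnd H"
    by (rule LIMSEQ_le_const2[OF L]) (use EE_bnd[OF assms] in auto)
  have inc: "incseq (\<lambda>t. EE H \<sigma> \<tau> x t)" using EE_mono[OF assms] by (simp add: incseq_SucI)
  show "sink_payoff H x \<le> play_value H \<sigma> \<tau> x"
    using incseq_le[OF inc L, of 0] by simp
qed

lemma pv_fix:
  assumes "wfg H"
  shows "play_value H \<sigma> \<tau> x = IS (step H \<sigma> \<tau> x) (play_value H \<sigma> \<tau>)"
proof -
  let ?M = "step H \<sigma> \<tau> x"
  have fin: "finite (set_pmf ?M)" using fin_step[OF assms] .
  have eq: "IS ?M f = (\<Sum>a\<in>set_pmf ?M. pmf ?M a *\<^sub>R f a)" for f :: "_ \<Rightarrow> real"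
    by (rule integral_measure_pmf[OF fin]) auto
  have "(\<lambda>t. EE H \<sigma> \<tau> x (Suc t)) \<longlonglongrightarrow> IS ?M (play_value H \<sigma> \<tau>)"
    unfolding EE_Suc[OF assms] eq
    by (intro tendsto_intros EE_lim[OF assms])
  moreover have "(\<lambda>t. EE H \<sigma> \<tau> x (Suc t)) \<longlonglongrightarrow> play_value H \<sigma> \<tau> x"
    using EE_lim[OF assms] by (rule LIMSEQ_Suc)
  ultimately show ?thesis using LIMSEQ_unique by blast
qed

lemma pv_le:
  assumes "wfg H" and sup: "\<And>x. IS (step H \<sigma> \<tau> x) u \<le> u x"
    and r: "\<And>x. sink_payoff H x \<le> u x"
  shows "play_value H \<sigma> \<tau> x \<le> u x"
proof -
  have "EE H \<sigma> \<tau> x t \<le> u x" for t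
  proof (induction t arbitrary: x)
    case 0 then show ?case using r by simp
  next
    case (Suc t)
    have "EE H \<sigma> \<tau> x (Suc t) \<le> IS (step H \<sigma> \<tau> x) u"
      unfolding EE_Suc[OF assms(1)] by (rule int_step_mono[OF assms(1)]) (use Suc in auto)
    then show ?case using sup[of x] by linarith
  qed
  then show ?thesis by (intro LIMSEQ_le_const2[OF EE_lim[OF assms(1)]]) auto
qed



definition wfg2 :: "'v ssg \<Rightarrow> bool" where
 "wfg2 H \<longleftrightarrow> wfg H \<and> finite (verts H) \<and> arcs H \<subseteq> verts H \<times> verts H \<and> (\<forall>y\<in>Vmin H. outn H y \<noteq> {})"

lemma step_cong:
  "(x \<in> Vmin H \<Longrightarrow> x \<notin> Vmax H \<Longrightarrow> \<tau>1 x = \<tau>2 x) \<Longrightarrow> step H \<sigma> \<tau>1 x = step H \<sigma> \<tau>2 x"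
  unfolding step_def by auto

lemma best_response_exists:
  assumes w2: "wfg2 H"
  shows "\<exists>\<tau>. best_response H \<sigma> \<tau>"
proof -
  have w: "wfg H" using w2 unfolding wfg2_def by auto
  define S where "S = {\<tau>. min_strategy H \<tau> \<and> (\<forall>x. x \<notin> Vmin H \<longrightarrow> \<tau> x = x)}"
  have "finite S"
  proof -
    have inj: "inj_on (\<lambda>\<tau>. restrict \<tau> (Vmin H)) S"
      unfolding S_def inj_on_def by (auto simp: fun_eq_iff restrict_def) (metis)
    have "(\<lambda>\<tau>. restrict \<tau> (Vmin H)) ` S \<subseteq> PiE (Vmin H) (\<lambda>_. verts H)"
      using w2 unfolding S_def wfg2_def min_strategy_def by auto
    moreover have "finite (PiE (Vmin H) (\<lambda>_. verts H))"
      using w2 unfolding wfg2_def verts_def by (intro finite_PiE) auto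
    ultimately show ?thesis using inj finite_imageD finite_subset by metis
  qed
  define \<tau>0 where "\<tau>0 x = (if x \<in> Vmin H then (SOME y. (x, y) \<in> arcs H) else x)" for x
  have "\<tau>0 \<in> S"
    using w2 unfolding S_def wfg2_def min_strategy_def \<tau>0_def outn_def
    by (auto intro: someI_ex)
  then have Sne: "S \<noteq> {}" by auto
  define F where "F \<tau> = (\<Sum>x\<in>verts H. play_value H \<sigma> \<tau> x)" for \<tau>
  obtain \<tau>m where \<tau>m: "\<tau>m \<in> S" "\<And>\<tau>. \<tau> \<in> S \<Longrightarrow> F \<tau>m \<le> F \<tau>"
  proof -
    have "Min (F ` S) \<in> F ` S" using \<open>finite S\<close> Sne by (intro Min_in) auto
    then obtain \<tau>m where "\<tau>m \<in> S" "F \<tau>m = Min (F ` S)" by auto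
    then show ?thesis using that \<open>finite S\<close> by (metis Min_le finite_imageI imageI)
  qed
  have "best_response H \<sigma> \<tau>m"
    unfolding best_response_def
  proof (intro conjI allI impI ballI)
    show "min_strategy H \<tau>m" using \<tau>m(1) unfolding S_def by auto
    fix \<tau>' x assume ms': "min_strategy H \<tau>'" and xv: "x \<in> verts H"
    show "play_value H \<sigma> \<tau>m x \<le> play_value H \<sigma> \<tau>' x"
    proof (rule ccontr)
      assume "\<not> ?thesis"
      then have lt: "play_value H \<sigma> \<tau>' x < play_value H \<sigma> \<tau>m x" by simp
      define v where "v = play_value H \<sigma> \<tau>m"
      define w where "w = play_value H \<sigma> \<tau>'"
      define u where "u y = min (v y) (w y)" for y
      define \<tau>2 where "\<tau>2 y = (if y \<in> Vmin H then (if w y < v y then \<tau>' y else \<tau>m y) else y)" for y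
      have "\<tau>2 \<in> S" using \<tau>m(1) ms' unfolding S_def min_strategy_def \<tau>2_def by auto
      have le: "play_value H \<sigma> \<tau>2 y \<le> u y" for y
      proof (rule pv_le[OF w])
        fix y
        show "sink_payoff H y \<le> u y" unfolding u_def v_def w_def using pv_bnd[OF w] by simp
        have Iv: "IS (step H \<sigma> \<tau>m y) u \<le> v y"
          using int_step_mono[OF w, of u v] pv_fix[OF w, of \<sigma> \<tau>m y] unfolding u_def v_def by simp
        have Iw: "IS (step H \<sigma> \<tau>' y) u \<le> w y"
          using int_step_mono[OF w, of u w] pv_fix[OF w, of \<sigma> \<tau>' y] unfolding u_def w_def by simp
        show "IS (step H \<sigma> \<tau>2 y) u \<le> u y"
        proof (cases "y \<in> Vmin H \<and> y \<notin> Vmax H")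
          case True
          show ?thesis
          proof (cases "w y < v y")
            case True
            then have "step H \<sigma> \<tau>2 y = step H \<sigma> \<tau>' y" by (intro step_cong) (simp add: \<tau>2_def)
            then show ?thesis using Iw True unfolding u_def by simp
          next
            case False
            then have "step H \<sigma> \<tau>2 y = step H \<sigma> \<tau>m y" by (intro step_cong) (simp add: \<tau>2_def)
            then show ?thesis using Iv False unfolding u_def by simp
          qed
        next
          case False
          then have "step H \<sigma> \<tau>2 y = step H \<sigma> \<tau>' y" "step H \<sigma> \<tau>2 y = step H \<sigma> \<tau>m y"
            by (auto intro: step_cong)
          then show ?thesis using Iv Iw unfolding u_def by simp
        qed
      qed
      have "F \<tau>2 < F \<tau>m" unfolding F_def
      proof (rule sum_strict_mono_ex1)
        show "finite (verts H)" using w2 unfolding wfg2_def by auto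
        show "\<forall>y\<in>verts H. play_value H \<sigma> \<tau>2 y \<le> play_value H \<sigma> \<tau>m y"
          using le unfolding u_def v_def by (metis min.bounded_iff)
        show "\<exists>y\<in>verts H. play_value H \<sigma> \<tau>2 y < play_value H \<sigma> \<tau>m y"
          using le[of x] lt xv unfolding u_def v_def w_def by (intro bexI[of _ x]) auto
      qed
      then show False using \<tau>m(2)[OF \<open>\<tau>2 \<in> S\<close>] by simp
    qed
  qed
  then show ?thesis by blast
qed



lemma pv_step_eq:
  assumes "step H \<sigma> \<tau>1 = step H \<sigma> \<tau>2"
  shows "play_value H \<sigma> \<tau>1 = play_value H \<sigma> \<tau>2"
proof -
  have "play_dist H \<sigma> \<tau>1 x t = play_dist H \<sigma> \<tau>2 x t" for x t
    by (induction t) (simp_all add: assms)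
  then show ?thesis unfolding play_value_def by simp
qed

lemma ssg_wfg2: assumes "is_ssg G" shows "wfg2 G"
proof -
  have fv: "finite (verts G)" and ar: "arcs G \<subseteq> verts G \<times> verts G"
    using assms unfolding is_ssg_def by auto
  have fa: "finite (arcs G)" using fv ar by (meson finite_SigmaI finite_subset)
  have fo: "finite {y. (x, y) \<in> arcs G}" for x
    by (rule finite_subset[of _ "snd ` arcs G"]) (use fa in force)+
  show ?thesis using assms fv fo unfolding is_ssg_def wfg2_def wfg_def outn_def
    by (auto simp: verts_def)
qed

context
  fixes G :: "'v ssg" and A :: "('v \<times> 'v) set" and \<sigma> :: "'v \<Rightarrow> 'v"
  assumes ssg: "is_ssg G" and AG: "A \<subseteq> arcs G"
begin

abbreviation "GH \<equiv> transform_sigma G A \<sigma>"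

lemma GH_simps:
  "Vmax GH = Inl ` Vmax G" "Vmin GH = Inl ` Vmin G" "VR GH = Inl ` VR G"
  "VS GH = Inl ` VS G \<union> Inr ` A"
  "arcs GH = {(Inl x, redirect A x y) | x y. (x, y) \<in> arcs G} \<union> {(Inr e, Inr e) | e. e \<in> A}"
  "rdist GH (Inl x) = map_pmf (redirect A x) (rdist G x)"
  "rdist GH (Inr e) = return_pmf (Inr e)"
  "sval GH (Inl x) = sval G x"
  "sval GH (Inr (a, b)) = value_sigma G \<sigma> b"
  unfolding transform_sigma_def transform_def by auto

lemma wG: "wfg G" using ssg_wfg2[OF ssg] unfolding wfg2_def by auto

lemma verts_GH: "verts GH = Inl ` verts G \<union> Inr ` A"
  unfolding verts_def GH_simps by blast

lemma wGH: "wfg2 GH"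
proof -
  have fv: "finite (verts G)" and ar: "arcs G \<subseteq> verts G \<times> verts G"
    using ssg unfolding is_ssg_def by auto
  have fA: "finite A" using AG ar fv by (meson finite_SigmaI finite_subset)
  have c1: "finite (verts GH)" unfolding verts_GH using fv fA by blast
  have c2: "arcs GH \<subseteq> verts GH \<times> verts GH"
  proof
    fix p assume "p \<in> arcs GH"
    then consider x y where "(x, y) \<in> arcs G" "p = (Inl x, redirect A x y)"
      | e where "e \<in> A" "p = (Inr e, Inr e)"
      unfolding GH_simps by blast
    then show "p \<in> verts GH \<times> verts GH"
    proof cases
      case 1
      then show ?thesis using ar unfolding verts_GH redirect_def by auto
    next
      case 2
      then show ?thesis unfolding verts_GH by auto
    qed
  qed
  have c3: "\<forall>y\<in>Vmin GH. outn GH y \<noteq> {}"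
  proof
    fix p assume "p \<in> Vmin GH"
    then obtain y where y: "y \<in> Vmin G" "p = Inl y" unfolding GH_simps by blast
    have "\<forall>x\<in>Vmax G \<union> Vmin G \<union> VR G. outn G x \<noteq> {}" using ssg unfolding is_ssg_def using [[show_types, show_sorts]] apply (elim conjE) apply assumption done
    then have "outn G y \<noteq> {}" using y(1) by simp
    then obtain z where "(y, z) \<in> arcs G" unfolding outn_def by blast
    then have "(p, redirect A y z) \<in> arcs GH" unfolding GH_simps y by blast
    then show "outn GH p \<noteq> {}" unfolding outn_def by blast
  qed
  have c4: "\<forall>s\<in>VS GH. 0 \<le> sval GH s"
  proof
    fix s assume "s \<in> VS GH"
    then consider y where "y \<in> VS G" "s = Inl y" | e where "s = Inr e"
      unfolding GH_simps by blast
    then show "0 \<le> sval GH s"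
    proof cases
      case 1 then show ?thesis using ssg unfolding is_ssg_def GH_simps by (simp add: GH_simps)
    next
      case (2 e) then show ?thesis using pv_bnd(1)[OF wG] by (cases e) (simp add: GH_simps value_sigma_def)
    qed
  qed
  have c5: "\<forall>x\<in>VR GH. finite (set_pmf (rdist GH x))"
    using wG unfolding wfg_def GH_simps by (auto simp: GH_simps)
  have c6: "finite (VS GH)" using wG fA unfolding wfg_def GH_simps by blast
  have c7: "Vmax GH \<inter> Vmin GH = {} \<and> Vmax GH \<inter> VR GH = {} \<and> Vmin GH \<inter> VR GH = {} \<and>
      VS GH \<inter> (Vmax GH \<union> Vmin GH \<union> VR GH) = {}"
    using wG unfolding wfg_def GH_simps by blast
  show ?thesis unfolding wfg2_def wfg_def using c1 c2 c3 c4 c5 c6 c7 by blast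
qed

lemma wGH1: "wfg GH" using wGH unfolding wfg2_def by auto

lemma step_GH_in:
  assumes "y \<in> Vmax G \<union> Vmin G \<union> VR G"
  shows "step GH (lift_strategy A \<sigma>) (lift_strategy A \<tau>) (Inl y) = map_pmf (redirect A y) (step G \<sigma> \<tau> y)"
  using assms wG unfolding step_def wfg_def lift_strategy_def
  by (auto simp: GH_simps map_pmf_def bind_return_pmf)

lemma step_GH_out:
  assumes "y \<notin> Vmax G \<union> Vmin G \<union> VR G"
  shows "step GH \<sigma>' \<tau>' (Inl y) = return_pmf (Inl y)"
  using assms unfolding step_def by (auto simp: GH_simps)

lemma step_GH_Inr: "step GH \<sigma>' \<tau>' (Inr e) = return_pmf (Inr e)"
  unfolding step_def by (auto simp: GH_simps)

lemma step_G_out: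
  assumes "y \<notin> Vmax G \<union> Vmin G \<union> VR G"
  shows "step G \<sigma>' \<tau>' y = return_pmf y"
  using assms unfolding step_def by auto

theorem values_eq:
  assumes "x \<in> verts G"
  shows "value_sigma G \<sigma> x = value_sigma GH (lift_strategy A \<sigma>) (Inl x)"
proof -
  define \<sigma>h where "\<sigma>h = lift_strategy A \<sigma>"
  define \<tau>s where "\<tau>s = (SOME \<tau>. best_response G \<sigma> \<tau>)"
  have brs: "best_response G \<sigma> \<tau>s" unfolding \<tau>s_def
    using best_response_exists[OF ssg_wfg2[OF ssg]] by (rule someI_ex)
  define v where "v = value_sigma G \<sigma>"
  have v: "v = play_value G \<sigma> \<tau>s" unfolding v_def value_sigma_def \<tau>s_def ..
  define \<tau>h where "\<tau>h = (SOME \<tau>. best_response GH \<sigma>h \<tau>)"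
  have brh: "best_response GH \<sigma>h \<tau>h" unfolding \<tau>h_def
    using best_response_exists[OF wGH] by (rule someI_ex)
  define w where "w = value_sigma GH \<sigma>h"
  have w0: "w = play_value GH \<sigma>h \<tau>h" unfolding w_def value_sigma_def \<tau>h_def ..
  define \<tau> where "\<tau> y = (SOME z. (y, z) \<in> arcs G \<and> \<tau>h (Inl y) = redirect A y z)" for y
  have \<tau>: "(y, \<tau> y) \<in> arcs G \<and> \<tau>h (Inl y) = redirect A y (\<tau> y)" if "y \<in> Vmin G" for y
  proof -
    have "(Inl y, \<tau>h (Inl y)) \<in> arcs GH" using brh that
      unfolding best_response_def min_strategy_def by (auto simp: GH_simps)
    then have "\<exists>z. (y, z) \<in> arcs G \<and> \<tau>h (Inl y) = redirect A y z" by (auto simp: GH_simps)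
    then show ?thesis unfolding \<tau>_def by (rule someI_ex)
  qed
  have "step GH \<sigma>h \<tau>h = step GH \<sigma>h (lift_strategy A \<tau>)"
  proof
    fix p show "step GH \<sigma>h \<tau>h p = step GH \<sigma>h (lift_strategy A \<tau>) p"
      by (rule step_cong) (auto simp: GH_simps lift_strategy_def \<tau>)
  qed
  then have w: "w = play_value GH \<sigma>h (lift_strategy A \<tau>)" unfolding w0 by (rule pv_step_eq)
  have msG: "min_strategy G \<tau>s" using brs unfolding best_response_def by auto
  have ms_lift: "min_strategy GH (lift_strategy A \<tau>s)"
    using msG unfolding min_strategy_def by (auto simp: GH_simps lift_strategy_def)
  have xh: "Inl x \<in> verts GH" using assms unfolding verts_def by (auto simp: GH_simps)
  
  have A: "w (Inl x) \<le> v x"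
  proof -
    define u :: "'v + 'v \<times> 'v \<Rightarrow> real" where "u p = (case p of Inl y \<Rightarrow> v y | Inr (a, b) \<Rightarrow> v b)" for p
    have ured: "u (redirect A y z) = v z" for y z unfolding u_def redirect_def by auto
    have "play_value GH \<sigma>h (lift_strategy A \<tau>s) p \<le> u p" for p
    proof (rule pv_le[OF wGH1])
      fix p
      show "sink_payoff GH p \<le> u p"
      proof (cases p)
        case (Inl y)
        then show ?thesis using pv_bnd(3)[OF wG, where \<sigma>=\<sigma> and \<tau>=\<tau>s and x=y] pv_bnd(1)[OF wG, where \<sigma>=\<sigma> and \<tau>=\<tau>s and x=y]
          unfolding u_def v sink_payoff_def by (auto simp: GH_simps)
      next
        case (Inr e)
        then show ?thesis using pv_bnd(1)[OF wG, where \<sigma>=\<sigma> and \<tau>=\<tau>s]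
          unfolding u_def v sink_payoff_def
          by (cases e) (auto simp: GH_simps v[unfolded v_def])
      qed
      show "IS (step GH \<sigma>h (lift_strategy A \<tau>s) p) u \<le> u p"
      proof (cases p)
        case (Inl y)
        show ?thesis
        proof (cases "y \<in> Vmax G \<union> Vmin G \<union> VR G")
          case True
          have "IS (map_pmf (redirect A y) (step G \<sigma> \<tau>s y)) u = v y"
            using pv_fix[OF wG, of \<sigma> \<tau>s y] by (simp add: ured v)
          then show ?thesis unfolding Inl \<sigma>h_def step_GH_in[OF True] by (simp add: u_def)
        next
          case False
          then show ?thesis unfolding Inl by (simp add: step_GH_out)
        qed
      next
        case (Inr e)
        then show ?thesis by (simp add: step_GH_Inr)
      qed
    qed
    from this[of "Inl x"] have "play_value GH \<sigma>h (lift_strategy A \<tau>s) (Inl x) \<le> v x" by (simp add: u_def)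
    moreover have "w (Inl x) \<le> play_value GH \<sigma>h (lift_strategy A \<tau>s) (Inl x)"
      using brh ms_lift xh unfolding w0 best_response_def by blast
    ultimately show ?thesis by simp
  qed
  
  have B: "v x \<le> w (Inl x)"
  proof -
    define u where "u y = min (v y) (w (Inl y))" for y
    define \<tau>2 where "\<tau>2 y = (if y \<in> Vmin G then (if w (Inl y) < v y then \<tau> y else \<tau>s y) else y)" for y
    have ms2: "min_strategy G \<tau>2" using msG \<tau> unfolding min_strategy_def \<tau>2_def by auto
    have ule: "u z \<le> w (redirect A y z)" for y z
    proof (cases "(y, z) \<in> A")
      case True
      have "sink_payoff GH (Inr (y, z)) = v z"
        using True unfolding sink_payoff_def v_def by (auto simp: GH_simps)
      then have "v z \<le> w (Inr (y, z))" using pv_bnd(3)[OF wGH1] unfolding w by metis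
      then show ?thesis using True unfolding u_def redirect_def by simp
    next
      case False
      then show ?thesis unfolding u_def redirect_def by simp
    qed
    have le: "play_value G \<sigma> \<tau>2 y \<le> u y" for y
    proof (rule pv_le[OF wG])
      fix y
      have "sink_payoff GH (Inl y) = sink_payoff G y" unfolding sink_payoff_def by (auto simp: GH_simps)
      then show "sink_payoff G y \<le> u y" unfolding u_def v w using pv_bnd(3)[OF wG] pv_bnd(3)[OF wGH1]
        by (metis min.bounded_iff)
      have Iv: "IS (step G \<sigma> \<tau>s y) u \<le> v y"
        using int_step_mono[OF wG, of u v] pv_fix[OF wG, of \<sigma> \<tau>s y] unfolding u_def v by simp
      have Iw: "IS (step G \<sigma> \<tau> y) u \<le> w (Inl y)" if "y \<in> Vmax G \<union> Vmin G \<union> VR G"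
      proof -
        have "IS (step G \<sigma> \<tau> y) u \<le> IS (step G \<sigma> \<tau> y) (\<lambda>z. w (redirect A y z))"
          by (rule int_step_mono[OF wG]) (rule ule)
        also have "\<dots> = w (Inl y)"
          using pv_fix[OF wGH1, of \<sigma>h "lift_strategy A \<tau>" "Inl y"]
          unfolding \<sigma>h_def step_GH_in[OF that] by (simp add: w \<sigma>h_def)
        finally show ?thesis .
      qed
      show "IS (step G \<sigma> \<tau>2 y) u \<le> u y"
      proof (cases "y \<in> Vmax G \<union> Vmin G \<union> VR G")
        case False
        then show ?thesis by (simp add: step_G_out)
      next
        case True
        show ?thesis
        proof (cases "y \<in> Vmin G \<and> y \<notin> Vmax G \<and> \<not> w (Inl y) < v y")
          case True
          then have "step G \<sigma> \<tau>2 y = step G \<sigma> \<tau>s y" by (intro step_cong) (simp add: \<tau>2_def)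
          then show ?thesis using Iv True unfolding u_def by simp
        next
          case False
          have "step G \<sigma> \<tau>2 y = step G \<sigma> \<tau> y"
            using False by (intro step_cong) (simp add: \<tau>2_def)
          moreover have "step G \<sigma> \<tau>2 y = step G \<sigma> \<tau>s y" if "y \<notin> Vmin G \<or> y \<in> Vmax G"
            using that by (intro step_cong) auto
          ultimately show ?thesis using Iv Iw[OF True] False unfolding u_def
            by (cases "y \<notin> Vmin G \<or> y \<in> Vmax G") auto
        qed
      qed
    qed
    have "v x \<le> play_value G \<sigma> \<tau>2 x" using brs ms2 assms unfolding v best_response_def by blast
    also have "\<dots> \<le> w (Inl x)" using le[of x] unfolding u_def by simp
    finally show ?thesis .
  qed
  show ?thesis using A B unfolding v_def w_def \<sigma>h_def by simp
qed

end

theorem lemma11: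
  fixes G :: "'v ssg" and A :: "('v \<times> 'v) set" and \<sigma> :: "'v \<Rightarrow> 'v"
  assumes "is_ssg G"
    and "A \<subseteq> arcs G"
    and "max_strategy G \<sigma>"
  shows "\<forall>x \<in> verts G.
           (value_sigma G \<sigma> x = 0 \<longleftrightarrow>
            value_sigma (transform_sigma G A \<sigma>) (lift_strategy A \<sigma>) (Inl x) = 0)"
  using values_eq[OF assms(1,2)] by simp


end
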